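(* Let $\mathcal{X}=\mathcal{X}^{(1)}\times\cdots\times\mathcal{X}^{(d)}$ with each $\mathcal{X}^{(i)}$ finite, $P\in\mathcal{L}(\mathcal{X})$, and $L_i\in\mathcal{L}(\mathcal{X}^{(i)})$ for $i=1,\dots,d$. 1. (Pythagorean identity) If $\pi\in\mathcal{P}(\mathcal{X})$ is positive, then $D^\pi_{KL}(P\|\otimes_{i=1}^dL_i)=D^\pi_{KL}(P\|\otimes_{i=1}^dP^{(i)}_\pi)+D^\pi_{KL}(\otimes_{i=1}^dP^{(i)}_\pi\|\otimes_{i=1}^dL_i)=D^\pi_{KL}(P\|\otimes_{i=1}^dP^{(i)}_\pi)+\sum_{i=1}^dD^{\pi^{(i)}}_{KL}(P^{(i)}_\pi\|L_i)$, where $\pi^{(i)}$ is the $i$th marginal of $\pi$. In particular $\otimes_{i=1}^dP^{(i)}_\pi$ is the unique minimizer of $(L_1,\dots,L_d)\mapsto D^\pi_{KL}(P\|\otimes_iL_i)$, and $\mathbb{I}^\pi(P)=D^\pi_{KL}(P\|\otimes_{i=1}^dP^{(i)}_\pi)$. 2. (Bisection) If $\pi=\otimes_{i=1}^d\pi^{(i)}$ is a positive product distribution and $P$ is $\pi$-stationary, then $\mathbb{I}^\pi(P)=\mathbb{I}^\pi(P^* )$.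
   Context: $\mathcal{P}(\Omega),\mathcal{L}(\Omega)$: probability masses and transition matrices on finite $\Omega$. $D_{KL}^{\pi}(M\|L):=\sum_{x,y}\pi(x)M(x,y)\ln\frac{M(x,y)}{L(x,y)}$ (value $+\infty$ if $M(x,y)>0=L(x,y)$ for some $x$ with $\pi(x)>0$; $0\ln(0/0)=0$). $(\otimes_iL_i)(x,y)=\prod_iL_i(x^i,y^i)$. $\mathbb{I}^\pi(P):=\min_{L_i\in\mathcal{L}(\mathcal{X}^{(i)})}D^\pi_{KL}(P\|\otimes_{i=1}^dL_i)$. For positive $\pi$, the $i$th marginal transition matrix is $P^{(i)}_\pi(x^i,y^i):=\frac{\sum_{x^j,y^j,\,j\ne i}\pi(x)P(x,y)}{\pi^{(i)}(x^i)}$ where the sum is over all coordinates $j\neq i$ of $x=(x^1,\dots,x^d)$ and $y=(y^1,\dots,y^d)$. For $\pi$-stationary $P$, $P^*(x,y)=\frac{\pi(y)}{\pi(x)}P(y,x)$. *)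

theory Defs
  imports "HOL-Analysis.Analysis"
begin

definition stoch :: "'b set \<Rightarrow> ('b \<Rightarrow> 'b \<Rightarrow> real) \<Rightarrow> bool" where
  "stoch A M \<longleftrightarrow> (\<forall>x\<in>A. \<forall>y\<in>A. 0 \<le> M x y) \<and> (\<forall>x\<in>A. (\<Sum>y\<in>A. M x y) = 1)"

definition pmass :: "'b set \<Rightarrow> ('b \<Rightarrow> real) \<Rightarrow> bool" where
  "pmass A p \<longleftrightarrow> (\<forall>x\<in>A. 0 \<le> p x) \<and> (\<Sum>x\<in>A. p x) = 1"

definition KL :: "'b set \<Rightarrow> ('b \<Rightarrow> real) \<Rightarrow> ('b \<Rightarrow> 'b \<Rightarrow> real) \<Rightarrow> ('b \<Rightarrow> 'b \<Rightarrow> real) \<Rightarrow> ereal" where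
  "KL A \<pi> M L =
    (if \<exists>x\<in>A. \<exists>y\<in>A. 0 < \<pi> x \<and> 0 < M x y \<and> L x y = 0 then \<infinity>
     else ereal (\<Sum>x\<in>A. \<Sum>y\<in>A.
              if \<pi> x = 0 \<or> M x y = 0 then 0 else \<pi> x * M x y * ln (M x y / L x y)))"

text \<open>Product state space X = X^(1) x ... x X^(d), coordinates indexed by 0..<d.\<close>
definition prodspace :: "nat \<Rightarrow> (nat \<Rightarrow> 'a set) \<Rightarrow> (nat \<Rightarrow> 'a) set" where
  "prodspace d S = PiE {..<d} S"

definition tensor :: "nat \<Rightarrow> (nat \<Rightarrow> 'a \<Rightarrow> 'a \<Rightarrow> real) \<Rightarrow> (nat \<Rightarrow> 'a) \<Rightarrow> (nat \<Rightarrow> 'a) \<Rightarrow> real" where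
  "tensor d Ls x y = (\<Prod>i<d. Ls i (x i) (y i))"

definition marg :: "nat \<Rightarrow> (nat \<Rightarrow> 'a set) \<Rightarrow> ((nat \<Rightarrow> 'a) \<Rightarrow> real) \<Rightarrow> nat \<Rightarrow> 'a \<Rightarrow> real" where
  "marg d S \<pi> i a = (\<Sum>x\<in>{x\<in>prodspace d S. x i = a}. \<pi> x)"

definition margP :: "nat \<Rightarrow> (nat \<Rightarrow> 'a set) \<Rightarrow> ((nat \<Rightarrow> 'a) \<Rightarrow> real)
    \<Rightarrow> ((nat \<Rightarrow> 'a) \<Rightarrow> (nat \<Rightarrow> 'a) \<Rightarrow> real) \<Rightarrow> nat \<Rightarrow> 'a \<Rightarrow> 'a \<Rightarrow> real" where
  "margP d S \<pi> P i a b =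
     (\<Sum>x\<in>prodspace d S. \<Sum>y\<in>prodspace d S.
        if x i = a \<and> y i = b then \<pi> x * P x y else 0) / marg d S \<pi> i a"

definition Iinfo :: "nat \<Rightarrow> (nat \<Rightarrow> 'a set) \<Rightarrow> ((nat \<Rightarrow> 'a) \<Rightarrow> real)
    \<Rightarrow> ((nat \<Rightarrow> 'a) \<Rightarrow> (nat \<Rightarrow> 'a) \<Rightarrow> real) \<Rightarrow> ereal" where
  "Iinfo d S \<pi> P = Inf {KL (prodspace d S) \<pi> P (tensor d Ls) | Ls. \<forall>i<d. stoch (S i) (Ls i)}"

text \<open>Time reversal P^* with respect to pi.\<close>
definition dual :: "('b \<Rightarrow> real) \<Rightarrow> ('b \<Rightarrow> 'b \<Rightarrow> real) \<Rightarrow> 'b \<Rightarrow> 'b \<Rightarrow> real" where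
  "dual \<pi> P x y = \<pi> y / \<pi> x * P y x"

definition stationary :: "'b set \<Rightarrow> ('b \<Rightarrow> real) \<Rightarrow> ('b \<Rightarrow> 'b \<Rightarrow> real) \<Rightarrow> bool" where
  "stationary A \<pi> P \<longleftrightarrow> (\<forall>y\<in>A. (\<Sum>x\<in>A. \<pi> x * P x y) = \<pi> y)"

end

theory Submission
  imports Defs
begin

lemma gibbs_term:
  fixes p q :: real
  assumes "0 \<le> p" "0 \<le> q" "0 < p \<longrightarrow> 0 < q"
  shows "p - q \<le> (if p = 0 then 0 else p * ln (p / q))"
    and "(if p = 0 then 0 else p * ln (p / q)) = p - q \<Longrightarrow> p = q"
proof -
  have A: "p - q \<le> (if p = 0 then 0 else p * ln (p / q)) \<and>
        ((if p = 0 then 0 else p * ln (p / q)) = p - q \<longrightarrow> p = q)"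
  proof (cases "p = 0")
    case True then show ?thesis using assms by auto
  next
    case False
    then have pp: "0 < p" using assms by auto
    then have qp: "0 < q" using assms by auto
    have l: "ln (p / q) = - ln (q / p)" using pp qp by (simp add: ln_div)
    have le: "ln (q/p) \<le> q/p - 1" using ln_le_minus_one pp qp by simp
    have "p * ln (q/p) \<le> p * (q/p - 1)" using le pp by (simp add: mult_left_mono)
    also have e: "\<dots> = q - p" using pp by (simp add: field_simps)
    finally have 1: "p - q \<le> p * ln (p / q)" using l by simp
    have 2: "p * ln (p / q) = p - q \<Longrightarrow> p = q"
    proof -
      assume "p * ln (p / q) = p - q"
      moreover have "p*ln(p/q) = - (p*ln(q/p))" using l by simp
      ultimately have "p * ln (q/p) = p * (q/p - 1)" using e by linarith
      then have "ln (q/p) = q/p - 1" using pp by simp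
      then have "q/p = 1" using ln_eq_minus_one[of "q/p"] pp qp by simp
      then show "p = q" using pp by simp
    qed
    show ?thesis using 1 2 False by simp
  qed
  then show "p - q \<le> (if p = 0 then 0 else p * ln (p / q))" by blast
  show "(if p = 0 then 0 else p * ln (p / q)) = p - q \<Longrightarrow> p = q" using A by blast
qed

lemma gibbs_row:
  fixes p q :: "'b \<Rightarrow> real"
  assumes "finite B" "\<forall>b\<in>B. 0 \<le> p b" "\<forall>b\<in>B. 0 \<le> q b" "sum p B = 1" "sum q B = 1"
    "\<forall>b\<in>B. 0 < p b \<longrightarrow> 0 < q b"
  shows "0 \<le> (\<Sum>b\<in>B. if p b = 0 then 0 else p b * ln (p b / q b))"
    and "(\<Sum>b\<in>B. if p b = 0 then 0 else p b * ln (p b / q b)) = 0 \<Longrightarrow> \<forall>b\<in>B. p b = q b"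
proof -
  define t where "t b = (if p b = 0 then 0 else p b * ln (p b / q b))" for b
  have tb: "\<And>b. b \<in> B \<Longrightarrow> 0 \<le> t b - (p b - q b)"
    using gibbs_term(1) assms unfolding t_def by auto
  have eq: "(\<Sum>b\<in>B. t b) = (\<Sum>b\<in>B. t b - (p b - q b))"
    using assms by (simp add: sum_subtractf)
  show "0 \<le> (\<Sum>b\<in>B. if p b = 0 then 0 else p b * ln (p b / q b))"
    using eq tb unfolding t_def by (simp add: sum_nonneg)
  assume "(\<Sum>b\<in>B. if p b = 0 then 0 else p b * ln (p b / q b)) = 0"
  then have "(\<Sum>b\<in>B. t b - (p b - q b)) = 0" using eq unfolding t_def by simp
  then have "\<forall>b\<in>B. t b - (p b - q b) = 0" using sum_nonneg_eq_0_iff[OF assms(1), of "\<lambda>b. t b - (p b - q b)"] tb by blast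
  then show "\<forall>b\<in>B. p b = q b"
  proof (intro ballI)
    fix b assume "b \<in> B" "\<forall>b\<in>B. t b - (p b - q b) = 0"
    then have "t b = p b - q b" by simp
    then show "p b = q b" using gibbs_term(2)[of "p b" "q b"] assms \<open>b \<in> B\<close> unfolding t_def by simp
  qed
qed

lemma double_delta:
  fixes c :: "'b \<Rightarrow> 'b \<Rightarrow> real"
  assumes "finite A" "finite B" "u \<in> A" "v \<in> B"
  shows "(\<Sum>a\<in>A. \<Sum>b\<in>B. if u = a \<and> v = b then c a b else 0) = c u v"
proof -
  have "(\<Sum>a\<in>A. \<Sum>b\<in>B. if u = a \<and> v = b then c a b else 0)
      = (\<Sum>a\<in>A. if u = a then (\<Sum>b\<in>B. if v = b then c a b else 0) else 0)"
    by (rule sum.cong) auto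
  also have "\<dots> = c u v" using assms by simp
  finally show ?thesis .
qed

lemma swap4:
  "(\<Sum>a\<in>A. \<Sum>b\<in>B. \<Sum>x\<in>C. \<Sum>y\<in>D. f a b x y) = (\<Sum>x\<in>C. \<Sum>y\<in>D. \<Sum>a\<in>A. \<Sum>b\<in>B. f a b x y)"
proof -
  have "(\<Sum>a\<in>A. \<Sum>b\<in>B. \<Sum>x\<in>C. \<Sum>y\<in>D. f a b x y) = (\<Sum>a\<in>A. \<Sum>x\<in>C. \<Sum>b\<in>B. \<Sum>y\<in>D. f a b x y)"
    by (rule sum.cong[OF refl], rule sum.swap)
  also have "\<dots> = (\<Sum>x\<in>C. \<Sum>a\<in>A. \<Sum>b\<in>B. \<Sum>y\<in>D. f a b x y)" by (rule sum.swap)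
  also have "\<dots> = (\<Sum>x\<in>C. \<Sum>a\<in>A. \<Sum>y\<in>D. \<Sum>b\<in>B. f a b x y)"
    by (rule sum.cong[OF refl], rule sum.cong[OF refl], rule sum.swap)
  also have "\<dots> = (\<Sum>x\<in>C. \<Sum>y\<in>D. \<Sum>a\<in>A. \<Sum>b\<in>B. f a b x y)"
    by (rule sum.cong[OF refl], rule sum.swap)
  finally show ?thesis .
qed

locale pyth =
  fixes d :: nat and S :: "nat \<Rightarrow> 'a set" and \<pi> :: "(nat \<Rightarrow> 'a) \<Rightarrow> real"
    and P :: "(nat \<Rightarrow> 'a) \<Rightarrow> (nat \<Rightarrow> 'a) \<Rightarrow> real"
  assumes fin: "\<forall>i<d. finite (S i)"
    and Pst: "stoch (prodspace d S) P"
    and pm: "pmass (prodspace d S) \<pi>"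
    and pos: "\<forall>x\<in>prodspace d S. 0 < \<pi> x"
begin

abbreviation "X \<equiv> prodspace d S"
abbreviation "M \<equiv> margP d S \<pi> P"
abbreviation "mg \<equiv> marg d S \<pi>"
definition "N i a b = (\<Sum>x\<in>X. \<Sum>y\<in>X. if x i = a \<and> y i = b then \<pi> x * P x y else 0)"

lemma finX: "finite X"
  unfolding prodspace_def using fin by (intro finite_PiE) auto

lemma Xne: "X \<noteq> {}"
  using pm unfolding pmass_def by auto

lemma Pnn: "x \<in> X \<Longrightarrow> y \<in> X \<Longrightarrow> 0 \<le> P x y"
  using Pst unfolding stoch_def by auto

lemma Prow: "x \<in> X \<Longrightarrow> (\<Sum>y\<in>X. P x y) = 1"
  using Pst unfolding stoch_def by auto

lemma memX: "x \<in> X \<Longrightarrow> i < d \<Longrightarrow> x i \<in> S i"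
  unfolding prodspace_def by (auto simp: PiE_iff)

lemma ext_pt: assumes "i < d" "a \<in> S i" shows "\<exists>x\<in>X. x i = a"
proof -
  obtain x0 where x0: "x0 \<in> X" using Xne by auto
  have "x0(i := a) \<in> X" using x0 assms unfolding prodspace_def by (auto simp: PiE_iff extensional_def)
  then show ?thesis using assms by (intro bexI[of _ "x0(i:=a)"]) auto
qed

lemma mg_pos: assumes "i < d" "a \<in> S i" shows "0 < mg i a"
proof -
  obtain x where x: "x \<in> X" "x i = a" using ext_pt assms by blast
  have "0 < (\<Sum>x\<in>{x\<in>X. x i = a}. \<pi> x)"
    using x finX pos by (intro sum_pos) auto
  then show ?thesis unfolding marg_def by simp
qed

lemma N_nn: "0 \<le> N i a b"
  unfolding N_def using pos Pnn by (auto intro!: sum_nonneg)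

lemma M_eq: "M i a b = N i a b / mg i a"
  unfolding margP_def N_def by simp

lemma mgM: "i < d \<Longrightarrow> a \<in> S i \<Longrightarrow> mg i a * M i a b = N i a b"
  using mg_pos[of i a] M_eq by simp

lemma N_rowsum: assumes "i < d" "a \<in> S i" shows "(\<Sum>b\<in>S i. N i a b) = mg i a"
proof -
  have fS: "finite (S i)" using fin assms by auto
  have "(\<Sum>b\<in>S i. N i a b) = (\<Sum>x\<in>X. \<Sum>y\<in>X. \<Sum>b\<in>S i. if x i = a \<and> y i = b then \<pi> x * P x y else 0)"
    unfolding N_def by (simp add: sum.swap[of _ "S i"])
  also have "\<dots> = (\<Sum>x\<in>X. \<Sum>y\<in>X. if x i = a then \<pi> x * P x y else 0)"
  proof (intro sum.cong refl)
    fix x y assume "y \<in> X"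
    then have "y i \<in> S i" using memX assms by auto
    then show "(\<Sum>b\<in>S i. if x i = a \<and> y i = b then \<pi> x * P x y else 0) = (if x i = a then \<pi> x * P x y else 0)"
      using fS by (cases "x i = a") simp_all
  qed
  also have "\<dots> = (\<Sum>x\<in>X. if x i = a then \<pi> x else 0)"
  proof (intro sum.cong refl)
    fix x assume "x \<in> X"
    then show "(\<Sum>y\<in>X. if x i = a then \<pi> x * P x y else 0) = (if x i = a then \<pi> x else 0)"
      using Prow by (simp add: sum_distrib_left[symmetric])
  qed
  also have "\<dots> = mg i a" unfolding marg_def using finX by (simp add: sum.inter_filter)
  finally show ?thesis .
qed

lemma M_stoch: "i < d \<Longrightarrow> stoch (S i) (M i)"
  unfolding stoch_def
proof (intro conjI ballI)
  fix a b assume "i < d" "a \<in> S i" "b \<in> S i"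
  then show "0 \<le> M i a b" using M_eq N_nn[of i a b] mg_pos[of i a] by (simp add: divide_nonneg_pos)
next
  fix a assume "i < d" "a \<in> S i"
  then show "(\<Sum>b\<in>S i. M i a b) = 1"
    using M_eq N_rowsum[of i a] mg_pos[of i a] by (simp add: sum_divide_distrib[symmetric])
qed

lemma F4: assumes "i < d"
  shows "(\<Sum>x\<in>X. \<Sum>y\<in>X. \<pi> x * P x y * h (x i) (y i))
       = (\<Sum>a\<in>S i. \<Sum>b\<in>S i. mg i a * M i a b * h a b)"
proof -
  have fS: "finite (S i)" using fin assms by auto
  have "(\<Sum>a\<in>S i. \<Sum>b\<in>S i. mg i a * M i a b * h a b) = (\<Sum>a\<in>S i. \<Sum>b\<in>S i. N i a b * h a b)"
    using mgM assms by simp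
  also have "\<dots> = (\<Sum>a\<in>S i. \<Sum>b\<in>S i. \<Sum>x\<in>X. \<Sum>y\<in>X. if x i = a \<and> y i = b then \<pi> x * P x y * h a b else 0)"
    unfolding N_def sum_distrib_right by (intro sum.cong refl) simp
  also have "\<dots> = (\<Sum>x\<in>X. \<Sum>y\<in>X. \<Sum>a\<in>S i. \<Sum>b\<in>S i. if x i = a \<and> y i = b then \<pi> x * P x y * h a b else 0)"
    by (rule swap4)
  also have "\<dots> = (\<Sum>x\<in>X. \<Sum>y\<in>X. \<pi> x * P x y * h (x i) (y i))"
  proof (intro sum.cong refl)
    fix x y assume "x \<in> X" "y \<in> X"
    then show "(\<Sum>a\<in>S i. \<Sum>b\<in>S i. if x i = a \<and> y i = b then \<pi> x * P x y * h a b else 0) = \<pi> x * P x y * h (x i) (y i)"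
      using double_delta[OF fS fS, of "x i" "y i" "\<lambda>a b. \<pi> x * P x y * h a b"] memX assms by simp
  qed
  finally show ?thesis by simp
qed

end
context pyth begin

lemma F3: assumes "x \<in> X" "y \<in> X" "0 < P x y" "i < d"
  shows "0 < M i (x i) (y i)"
proof -
  define f where "f x' y' = (if x' i = x i \<and> y' i = y i then \<pi> x' * P x' y' else 0)" for x' y'
  have nn: "x' \<in> X \<Longrightarrow> y' \<in> X \<Longrightarrow> 0 \<le> f x' y'" for x' y'
    unfolding f_def using pos Pnn by (simp add: less_imp_le)
  have "0 < \<pi> x * P x y" using assms pos by simp
  also have "\<pi> x * P x y = f x y" unfolding f_def by simp
  also have "f x y \<le> (\<Sum>y'\<in>X. f x y')"
    using member_le_sum[of y X "f x"] assms finX nn by simp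
  also have "\<dots> \<le> (\<Sum>x'\<in>X. \<Sum>y'\<in>X. f x' y')"
    using member_le_sum[of x X "\<lambda>x'. \<Sum>y'\<in>X. f x' y'"] assms finX nn by (simp add: sum_nonneg)
  also have "\<dots> = N i (x i) (y i)" unfolding N_def f_def ..
  finally show ?thesis using M_eq mg_pos[of i "x i"] memX assms by simp
qed

lemma M_wit: assumes "i < d" "a \<in> S i" "b \<in> S i" "0 < M i a b"
  shows "\<exists>x\<in>X. \<exists>y\<in>X. x i = a \<and> y i = b \<and> 0 < P x y"
proof (rule ccontr)
  assume H: "\<not> ?thesis"
  then have "\<forall>x\<in>X. \<forall>y\<in>X. x i = a \<and> y i = b \<longrightarrow> P x y = 0"
  proof (intro ballI impI)
    fix x y assume "x \<in> X" "y \<in> X" "x i = a \<and> y i = b"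
    then show "P x y = 0" using H Pnn[of x y] by force
  qed
  then have "N i a b = 0" unfolding N_def by (auto intro!: sum.neutral)
  then show False using assms M_eq by simp
qed

lemma tensor_sum:
  assumes Q: "\<forall>j<d. stoch (S j) (Q j)" and x: "x \<in> X" and i: "i < d"
  shows "(\<Sum>y\<in>X. tensor d Q x y * h (y i)) = (\<Sum>b\<in>S i. Q i (x i) b * h b)"
proof -
  define F where "F j b = (if j = i then Q i (x i) b * h b else Q j (x j) b)" for j b
  have 1: "tensor d Q x y * h (y i) = (\<Prod>j<d. F j (y j))" for y
  proof -
    have "(\<Prod>j<d. F j (y j)) = F i (y i) * (\<Prod>j\<in>{..<d}-{i}. F j (y j))"
      using i by (subst prod.remove[of _ i]) auto
    also have "(\<Prod>j\<in>{..<d}-{i}. F j (y j)) = (\<Prod>j\<in>{..<d}-{i}. Q j (x j) (y j))"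
      unfolding F_def by (intro prod.cong) auto
    also have "tensor d Q x y = Q i (x i) (y i) * (\<Prod>j\<in>{..<d}-{i}. Q j (x j) (y j))"
      unfolding tensor_def using i by (subst prod.remove[of _ i]) auto
    ultimately show ?thesis unfolding F_def by simp
  qed
  have "(\<Sum>y\<in>X. tensor d Q x y * h (y i)) = (\<Sum>y\<in>PiE {..<d} S. \<Prod>j<d. F j (y j))"
    unfolding prodspace_def using 1 by simp
  also have "\<dots> = (\<Prod>j<d. \<Sum>b\<in>S j. F j b)"
    using fin by (subst prod_sum_PiE) auto
  also have "\<dots> = (\<Sum>b\<in>S i. F i b) * (\<Prod>j\<in>{..<d}-{i}. \<Sum>b\<in>S j. F j b)"
    using i by (subst prod.remove[of _ i]) auto
  also have "(\<Prod>j\<in>{..<d}-{i}. \<Sum>b\<in>S j. F j b) = 1"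
  proof (intro prod.neutral ballI)
    fix j assume "j \<in> {..<d} - {i}"
    then show "(\<Sum>b\<in>S j. F j b) = 1" using Q x memX unfolding F_def stoch_def by auto
  qed
  finally show ?thesis unfolding F_def by simp
qed

end
context pyth begin

definition "CC L \<longleftrightarrow> (\<forall>i<d. \<forall>a\<in>S i. \<forall>b\<in>S i. 0 < M i a b \<longrightarrow> L i a b \<noteq> 0)"
definition "g L i a b = (if M i a b = 0 then 0 else ln (M i a b / L i a b))"
definition "Kd L i = (\<Sum>a\<in>S i. \<Sum>b\<in>S i. if mg i a = 0 \<or> M i a b = 0 then 0
      else mg i a * M i a b * ln (M i a b / L i a b))"
definition "K0 = (\<Sum>x\<in>X. \<Sum>y\<in>X. if \<pi> x = 0 \<or> P x y = 0 then 0
      else \<pi> x * P x y * ln (P x y / tensor d M x y))"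

lemma Kd_eq: "i < d \<Longrightarrow> Kd L i = (\<Sum>a\<in>S i. \<Sum>b\<in>S i. mg i a * M i a b * g L i a b)"
  unfolding Kd_def g_def using mg_pos by (intro sum.cong refl) auto

lemma KL_i: assumes "i < d"
  shows "KL (S i) (mg i) (M i) (L i) =
    (if (\<forall>a\<in>S i. \<forall>b\<in>S i. 0 < M i a b \<longrightarrow> L i a b \<noteq> 0) then ereal (Kd L i) else \<infinity>)"
  unfolding KL_def Kd_def using mg_pos[OF assms] by auto

lemma tensor_pos: "(\<forall>j<d. 0 < L j (x j) (y j)) \<Longrightarrow> 0 < tensor d L x y"
  unfolding tensor_def by (intro prod_pos) auto

lemma tensor_zero: "tensor d L x y = 0 \<longleftrightarrow> (\<exists>j<d. L j (x j) (y j) = 0)"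
  unfolding tensor_def by (subst prod_zero_iff) auto

lemma ln_tensor: "(\<forall>j<d. 0 < L j (x j) (y j)) \<Longrightarrow> ln (tensor d L x y) = (\<Sum>j<d. ln (L j (x j) (y j)))"
  unfolding tensor_def by (subst ln_prod) auto

lemma Lnn: "\<forall>i<d. stoch (S i) (L i) \<Longrightarrow> x \<in> X \<Longrightarrow> y \<in> X \<Longrightarrow> j < d \<Longrightarrow> 0 \<le> L j (x j) (y j)"
  using memX unfolding stoch_def by blast

lemma Mnn: "x \<in> X \<Longrightarrow> y \<in> X \<Longrightarrow> j < d \<Longrightarrow> 0 \<le> M j (x j) (y j)"
  using Lnn[of M] M_stoch by blast

lemma term_P:
  assumes L: "\<forall>i<d. stoch (S i) (L i)" and C: "CC L" and x: "x \<in> X" and y: "y \<in> X"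
  shows "(if \<pi> x = 0 \<or> P x y = 0 then 0 else \<pi> x * P x y * ln (P x y / tensor d L x y))
    = (if \<pi> x = 0 \<or> P x y = 0 then 0 else \<pi> x * P x y * ln (P x y / tensor d M x y))
      + (\<Sum>i<d. \<pi> x * P x y * g L i (x i) (y i))"
proof (cases "P x y = 0")
  case True then show ?thesis by simp
next
  case False
  then have Pp: "0 < P x y" using Pnn[OF x y] by simp
  have pp: "0 < \<pi> x" using pos x by simp
  have Mp: "\<forall>j<d. 0 < M j (x j) (y j)" using F3 x y Pp by blast
  have Lp: "\<forall>j<d. 0 < L j (x j) (y j)"
    using Mp C Lnn[OF L x y] memX x y unfolding CC_def by (metis order_le_less)
  have gj: "\<forall>j<d. g L j (x j) (y j) = ln (M j (x j) (y j)) - ln (L j (x j) (y j))"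
  proof (intro allI impI)
    fix j assume "j < d"
    then have "0 < M j (x j) (y j)" "0 < L j (x j) (y j)" using Mp Lp by auto
    then show "g L j (x j) (y j) = ln (M j (x j) (y j)) - ln (L j (x j) (y j))"
      unfolding g_def by (simp add: ln_div)
  qed
  have "ln (P x y / tensor d L x y) = ln (P x y) - (\<Sum>j<d. ln (L j (x j) (y j)))"
    using Pp tensor_pos[of L x y, OF Lp] ln_tensor[of L x y, OF Lp] by (simp add: ln_div)
  also have "\<dots> = (ln (P x y) - (\<Sum>j<d. ln (M j (x j) (y j)))) + (\<Sum>j<d. g L j (x j) (y j))"
    using gj by (simp add: sum_subtractf)
  also have "\<dots> = ln (P x y / tensor d M x y) + (\<Sum>j<d. g L j (x j) (y j))"
    using Pp tensor_pos[of M x y, OF Mp] ln_tensor[of M x y, OF Mp] by (simp add: ln_div)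
  finally show ?thesis using False pp by (simp add: distrib_left sum_distrib_left)
qed

lemma KL_P:
  assumes L: "\<forall>i<d. stoch (S i) (L i)"
  shows "KL X \<pi> P (tensor d L) = (if CC L then ereal (K0 + (\<Sum>i<d. Kd L i)) else \<infinity>)"
proof -
  have cond: "(\<exists>x\<in>X. \<exists>y\<in>X. 0 < \<pi> x \<and> 0 < P x y \<and> tensor d L x y = 0) \<longleftrightarrow> \<not> CC L"
  proof
    assume "\<exists>x\<in>X. \<exists>y\<in>X. 0 < \<pi> x \<and> 0 < P x y \<and> tensor d L x y = 0"
    then obtain x y where xy: "x \<in> X" "y \<in> X" "0 < P x y" "tensor d L x y = 0" by blast
    then obtain j where j: "j < d" "L j (x j) (y j) = 0" using tensor_zero by blast
    have "0 < M j (x j) (y j)" using F3 xy j by blast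
    then show "\<not> CC L" unfolding CC_def using j memX xy by blast
  next
    assume "\<not> CC L"
    then obtain i a b where iab: "i < d" "a \<in> S i" "b \<in> S i" "0 < M i a b" "L i a b = 0"
      unfolding CC_def by blast
    then obtain x y where xy: "x \<in> X" "y \<in> X" "x i = a" "y i = b" "0 < P x y" using M_wit by blast
    have "tensor d L x y = 0" using tensor_zero iab xy by blast
    then show "\<exists>x\<in>X. \<exists>y\<in>X. 0 < \<pi> x \<and> 0 < P x y \<and> tensor d L x y = 0" using xy pos by blast
  qed
  show ?thesis
  proof (cases "CC L")
    case False then show ?thesis using cond unfolding KL_def by auto
  next
    case True
    have "(\<Sum>x\<in>X. \<Sum>y\<in>X. if \<pi> x = 0 \<or> P x y = 0 then 0 else \<pi> x * P x y * ln (P x y / tensor d L x y))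
      = (\<Sum>x\<in>X. \<Sum>y\<in>X. (if \<pi> x = 0 \<or> P x y = 0 then 0 else \<pi> x * P x y * ln (P x y / tensor d M x y))
      + (\<Sum>i<d. \<pi> x * P x y * g L i (x i) (y i)))"
      using term_P[OF L True] by (intro sum.cong refl) auto
    also have "\<dots> = K0 + (\<Sum>x\<in>X. \<Sum>y\<in>X. \<Sum>i<d. \<pi> x * P x y * g L i (x i) (y i))"
      unfolding K0_def by (simp add: sum.distrib)
    also have "(\<Sum>x\<in>X. \<Sum>y\<in>X. \<Sum>i<d. \<pi> x * P x y * g L i (x i) (y i))
       = (\<Sum>i<d. \<Sum>x\<in>X. \<Sum>y\<in>X. \<pi> x * P x y * g L i (x i) (y i))"
      by (subst sum.swap) (simp add: sum.swap[of _ X "{..<d}"])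
    also have "\<dots> = (\<Sum>i<d. Kd L i)"
      using F4 Kd_eq by (intro sum.cong refl) simp
    finally show ?thesis using True cond unfolding KL_def by auto
  qed
qed

end
context pyth begin

lemma row_pos: assumes "j < d" "a \<in> S j" shows "\<exists>b\<in>S j. 0 < M j a b"
proof (rule ccontr)
  assume H: "\<not> ?thesis"
  have "(\<Sum>b\<in>S j. M j a b) \<le> 0" using H by (intro sum_nonpos) (auto simp: not_less)
  then show False using M_stoch[OF assms(1)] assms unfolding stoch_def by auto
qed

lemma tensor_nn: "\<forall>i<d. stoch (S i) (L i) \<Longrightarrow> x \<in> X \<Longrightarrow> y \<in> X \<Longrightarrow> 0 \<le> tensor d L x y"
  unfolding tensor_def using Lnn by (intro prod_nonneg) auto

lemma term_Q:
  assumes L: "\<forall>i<d. stoch (S i) (L i)" and C: "CC L" and x: "x \<in> X" and y: "y \<in> X"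
  shows "(if \<pi> x = 0 \<or> tensor d M x y = 0 then 0 else \<pi> x * tensor d M x y * ln (tensor d M x y / tensor d L x y))
    = (\<Sum>i<d. \<pi> x * tensor d M x y * g L i (x i) (y i))"
proof (cases "tensor d M x y = 0")
  case True then show ?thesis by simp
next
  case False
  have pp: "0 < \<pi> x" using pos x by simp
  have Mp: "\<forall>j<d. 0 < M j (x j) (y j)"
    using False tensor_zero[of M x y] Mnn[OF x y] by (metis order_le_less)
  have Lp: "\<forall>j<d. 0 < L j (x j) (y j)"
    using Mp C Lnn[OF L x y] memX x y unfolding CC_def by (metis order_le_less)
  have gj: "\<forall>j<d. g L j (x j) (y j) = ln (M j (x j) (y j)) - ln (L j (x j) (y j))"
  proof (intro allI impI)
    fix j assume "j < d"
    then have "0 < M j (x j) (y j)" "0 < L j (x j) (y j)" using Mp Lp by auto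
    then show "g L j (x j) (y j) = ln (M j (x j) (y j)) - ln (L j (x j) (y j))"
      unfolding g_def by (simp add: ln_div)
  qed
  have "ln (tensor d M x y / tensor d L x y) = (\<Sum>j<d. ln (M j (x j) (y j))) - (\<Sum>j<d. ln (L j (x j) (y j)))"
    using tensor_pos[of L x y, OF Lp] ln_tensor[of L x y, OF Lp]
      tensor_pos[of M x y, OF Mp] ln_tensor[of M x y, OF Mp] by (simp add: ln_div)
  also have "\<dots> = (\<Sum>j<d. g L j (x j) (y j))"
    using gj by (simp add: sum_subtractf)
  finally show ?thesis using False pp by (simp add: sum_distrib_left)
qed

lemma group_X: assumes "i < d"
  shows "(\<Sum>x\<in>X. \<pi> x * f (x i)) = (\<Sum>a\<in>S i. mg i a * f a)"
proof -
  have "(\<Sum>x\<in>X. \<pi> x * f (x i)) = (\<Sum>a\<in>S i. \<Sum>x\<in>{x\<in>X. x i = a}. \<pi> x * f (x i))"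
    by (rule sum.group[symmetric, OF finX]) (use fin assms memX in auto)
  also have "\<dots> = (\<Sum>a\<in>S i. mg i a * f a)"
  proof (intro sum.cong refl)
    fix a assume "a \<in> S i"
    have "(\<Sum>x\<in>{x\<in>X. x i = a}. \<pi> x * f (x i)) = (\<Sum>x\<in>{x\<in>X. x i = a}. \<pi> x * f a)"
      by (intro sum.cong refl) auto
    then show "(\<Sum>x\<in>{x\<in>X. x i = a}. \<pi> x * f (x i)) = mg i a * f a"
      unfolding marg_def by (simp add: sum_distrib_right)
  qed
  finally show ?thesis .
qed

lemma KL_Q:
  assumes L: "\<forall>i<d. stoch (S i) (L i)"
  shows "KL X \<pi> (tensor d M) (tensor d L) = (if CC L then ereal (\<Sum>i<d. Kd L i) else \<infinity>)"
proof -
  have cond: "(\<exists>x\<in>X. \<exists>y\<in>X. 0 < \<pi> x \<and> 0 < tensor d M x y \<and> tensor d L x y = 0) \<longleftrightarrow> \<not> CC L"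
  proof
    assume "\<exists>x\<in>X. \<exists>y\<in>X. 0 < \<pi> x \<and> 0 < tensor d M x y \<and> tensor d L x y = 0"
    then obtain x y where xy: "x \<in> X" "y \<in> X" "0 < tensor d M x y" "tensor d L x y = 0" by blast
    then obtain j where j: "j < d" "L j (x j) (y j) = 0" using tensor_zero by blast
    have "M j (x j) (y j) \<noteq> 0" using xy j tensor_zero[of M x y] by auto
    then have "0 < M j (x j) (y j)" using Mnn[of x y j] xy j by simp
    then show "\<not> CC L" unfolding CC_def using j memX xy by blast
  next
    assume "\<not> CC L"
    then obtain i a b where iab: "i < d" "a \<in> S i" "b \<in> S i" "0 < M i a b" "L i a b = 0"
      unfolding CC_def by blast
    obtain x where x: "x \<in> X" "x i = a" using ext_pt iab by blast
    define y where "y j = (if j < d then if j = i then b else (SOME b'. b' \<in> S j \<and> 0 < M j (x j) b') else undefined)" for j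
    have yj: "y j \<in> S j \<and> 0 < M j (x j) (y j)" if "j < d" for j
    proof (cases "j = i")
      case True then show ?thesis using iab x that unfolding y_def by simp
    next
      case False
      have "\<exists>b'. b' \<in> S j \<and> 0 < M j (x j) b'" using row_pos[OF that memX[OF x(1) that]] by blast
      then have "(SOME b'. b' \<in> S j \<and> 0 < M j (x j) b') \<in> S j \<and> 0 < M j (x j) (SOME b'. b' \<in> S j \<and> 0 < M j (x j) b')"
        by (rule someI_ex)
      then show ?thesis using False that unfolding y_def by simp
    qed
    have y: "y \<in> X" unfolding prodspace_def using yj by (auto simp: PiE_iff extensional_def y_def)
    have "0 < tensor d M x y" using yj by (intro tensor_pos) auto
    moreover have "tensor d L x y = 0" using tensor_zero[of L x y] iab x by (auto simp: y_def)
    ultimately show "\<exists>x\<in>X. \<exists>y\<in>X. 0 < \<pi> x \<and> 0 < tensor d M x y \<and> tensor d L x y = 0"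
      using x y pos by blast
  qed
  show ?thesis
  proof (cases "CC L")
    case False then show ?thesis using cond unfolding KL_def by auto
  next
    case True
    have "(\<Sum>x\<in>X. \<Sum>y\<in>X. if \<pi> x = 0 \<or> tensor d M x y = 0 then 0 else \<pi> x * tensor d M x y * ln (tensor d M x y / tensor d L x y))
      = (\<Sum>x\<in>X. \<Sum>y\<in>X. \<Sum>i<d. \<pi> x * tensor d M x y * g L i (x i) (y i))"
      using term_Q[OF L True] by (intro sum.cong refl) auto
    also have "\<dots> = (\<Sum>i<d. \<Sum>x\<in>X. \<Sum>y\<in>X. \<pi> x * tensor d M x y * g L i (x i) (y i))"
      by (subst sum.swap) (simp add: sum.swap[of _ X "{..<d}"])
    also have "\<dots> = (\<Sum>i<d. Kd L i)"
    proof (intro sum.cong refl)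
      fix i assume i: "i \<in> {..<d}"
      have "(\<Sum>x\<in>X. \<Sum>y\<in>X. \<pi> x * tensor d M x y * g L i (x i) (y i))
          = (\<Sum>x\<in>X. \<pi> x * (\<Sum>y\<in>X. tensor d M x y * g L i (x i) (y i)))"
        by (simp add: sum_distrib_left mult.assoc)
      also have "\<dots> = (\<Sum>x\<in>X. \<pi> x * (\<Sum>b\<in>S i. M i (x i) b * g L i (x i) b))"
        using tensor_sum[of M _ i "g L i (x i)" for x] M_stoch i
        by (intro sum.cong refl) (simp add: tensor_sum[OF _ _, of M])
      also have "\<dots> = (\<Sum>a\<in>S i. mg i a * (\<Sum>b\<in>S i. M i a b * g L i a b))"
        using group_X i by simp
      also have "\<dots> = Kd L i" using Kd_eq i by (simp add: sum_distrib_left mult.assoc)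
      finally show "(\<Sum>x\<in>X. \<Sum>y\<in>X. \<pi> x * tensor d M x y * g L i (x i) (y i)) = Kd L i" .
    qed
    finally show ?thesis using True cond unfolding KL_def by auto
  qed
qed

end
context pyth begin

lemma sum_KL:
  shows "(\<Sum>i<d. KL (S i) (mg i) (M i) (L i)) = (if CC L then ereal (\<Sum>i<d. Kd L i) else \<infinity>)"
proof -
  have "(\<Sum>i<d. KL (S i) (mg i) (M i) (L i)) =
     (\<Sum>i<d. if (\<forall>a\<in>S i. \<forall>b\<in>S i. 0 < M i a b \<longrightarrow> L i a b \<noteq> 0) then ereal (Kd L i) else \<infinity>)"
    using KL_i by (intro sum.cong refl) auto
  also have "\<dots> = (if CC L then ereal (\<Sum>i<d. Kd L i) else \<infinity>)"
  proof (cases "CC L")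
    case True
    then have "(\<Sum>i<d. if (\<forall>a\<in>S i. \<forall>b\<in>S i. 0 < M i a b \<longrightarrow> L i a b \<noteq> 0) then ereal (Kd L i) else \<infinity>)
       = (\<Sum>i<d. ereal (Kd L i))" unfolding CC_def by (intro sum.cong refl) auto
    then show ?thesis using True by simp
  next
    case False
    then obtain i where i: "i < d" "\<not> (\<forall>a\<in>S i. \<forall>b\<in>S i. 0 < M i a b \<longrightarrow> L i a b \<noteq> 0)"
      unfolding CC_def by blast
    then have "\<exists>i\<in>{..<d}. (if (\<forall>a\<in>S i. \<forall>b\<in>S i. 0 < M i a b \<longrightarrow> L i a b \<noteq> 0) then ereal (Kd L i) else \<infinity>) = \<infinity>"
      by auto
    then have "(\<Sum>i<d. if (\<forall>a\<in>S i. \<forall>b\<in>S i. 0 < M i a b \<longrightarrow> L i a b \<noteq> 0) then ereal (Kd L i) else \<infinity>) = \<infinity>"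
      by (intro sum_Pinfty[THEN iffD2]) auto
    then show ?thesis using False by simp
  qed
  finally show ?thesis .
qed

lemma Kd_nonneg:
  assumes i: "i < d" and L: "stoch (S i) (L i)" and C: "\<forall>a\<in>S i. \<forall>b\<in>S i. 0 < M i a b \<longrightarrow> L i a b \<noteq> 0"
  shows "0 \<le> Kd L i" and "Kd L i = 0 \<Longrightarrow> \<forall>a\<in>S i. \<forall>b\<in>S i. L i a b = M i a b"
proof -
  have fS: "finite (S i)" using fin i by auto
  define G where "G a = (\<Sum>b\<in>S i. if M i a b = 0 then 0 else M i a b * ln (M i a b / L i a b))" for a
  have KdG: "Kd L i = (\<Sum>a\<in>S i. mg i a * G a)"
    unfolding Kd_def G_def sum_distrib_left using mg_pos[OF i]
    by (intro sum.cong refl) (auto simp: mult.assoc)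
  have gr: "0 \<le> G a \<and> (G a = 0 \<longrightarrow> (\<forall>b\<in>S i. M i a b = L i a b))" if a: "a \<in> S i" for a
  proof -
    have h: "finite (S i)" "\<forall>b\<in>S i. 0 \<le> M i a b" "\<forall>b\<in>S i. 0 \<le> L i a b"
      "sum (M i a) (S i) = 1" "sum (L i a) (S i) = 1"
      using fS M_stoch[OF i] L a unfolding stoch_def by auto
    have h2: "\<forall>b\<in>S i. 0 < M i a b \<longrightarrow> 0 < L i a b"
    proof (intro ballI impI)
      fix b assume "b \<in> S i" "0 < M i a b"
      then have "L i a b \<noteq> 0" "0 \<le> L i a b" using C a h(3) by auto
      then show "0 < L i a b" by simp
    qed
    note h = h h2
    show ?thesis using gibbs_row[OF h] unfolding G_def by blast
  qed
  have nnG: "0 \<le> mg i a * G a" if a: "a \<in> S i" for a using gr[OF a] mg_pos[OF i a] by simp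
  show "0 \<le> Kd L i" unfolding KdG using nnG by (intro sum_nonneg) blast
  assume "Kd L i = 0"
  then have "\<forall>a\<in>S i. mg i a * G a = 0"
    unfolding KdG using sum_nonneg_eq_0_iff[OF fS, of "\<lambda>a. mg i a * G a"] nnG by blast
  then show "\<forall>a\<in>S i. \<forall>b\<in>S i. L i a b = M i a b" using gr mg_pos[OF i] by fastforce
qed

lemma KL_PM: "KL X \<pi> P (tensor d M) = ereal K0"
proof -
  have C: "CC M" unfolding CC_def by auto
  have z: "(if mg i a = 0 \<or> M i a b = 0 then 0 else mg i a * M i a b * ln (M i a b / M i a b)) = 0" for i a b
    by simp
  have "Kd M i = 0" for i unfolding Kd_def z by simp
  then show ?thesis using KL_P[of M] M_stoch C by simp
qed

lemma KL_P_ge: assumes L: "\<forall>i<d. stoch (S i) (L i)" shows "ereal K0 \<le> KL X \<pi> P (tensor d L)"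
proof (cases "CC L")
  case True
  have "0 \<le> Kd L i" if "i < d" for i using Kd_nonneg(1)[OF that] L True that unfolding CC_def by blast
  then have "0 \<le> (\<Sum>i<d. Kd L i)" by (intro sum_nonneg) auto
  then show ?thesis using KL_P[OF L] True by simp
qed (use KL_P[OF L] in simp)

lemma Iinfo_eq: "Iinfo d S \<pi> P = ereal K0"
  unfolding Iinfo_def
proof (rule antisym)
  show "Inf {KL X \<pi> P (tensor d Ls) |Ls. \<forall>i<d. stoch (S i) (Ls i)} \<le> ereal K0"
  proof (rule Inf_lower)
    show "ereal K0 \<in> {KL X \<pi> P (tensor d Ls) |Ls. \<forall>i<d. stoch (S i) (Ls i)}"
      unfolding KL_PM[symmetric] using M_stoch by blast
  qed
  show "ereal K0 \<le> Inf {KL X \<pi> P (tensor d Ls) |Ls. \<forall>i<d. stoch (S i) (Ls i)}"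
    using KL_P_ge by (intro Inf_greatest) auto
qed

lemma part1:
  assumes L: "\<forall>i<d. stoch (S i) (L i)"
  shows "KL X \<pi> P (tensor d L) = KL X \<pi> P (tensor d M) + KL X \<pi> (tensor d M) (tensor d L)"
    and "KL X \<pi> P (tensor d L) = KL X \<pi> P (tensor d M) + (\<Sum>i<d. KL (S i) (mg i) (M i) (L i))"
  using KL_P[OF L] KL_Q[OF L] KL_PM sum_KL[of L] by auto

lemma uniq:
  assumes L: "\<forall>i<d. stoch (S i) (L i)" and E: "KL X \<pi> P (tensor d L) = Iinfo d S \<pi> P"
  shows "\<forall>i<d. \<forall>a\<in>S i. \<forall>b\<in>S i. L i a b = M i a b"
proof -
  have C: "CC L" using E Iinfo_eq KL_P[OF L] by (cases "CC L") auto
  then have s: "(\<Sum>i<d. Kd L i) = 0" using E Iinfo_eq KL_P[OF L] by simp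
  have nn: "\<And>i. i < d \<Longrightarrow> 0 \<le> Kd L i" using Kd_nonneg(1) L C unfolding CC_def by blast
  have "\<forall>i\<in>{..<d}. Kd L i = 0" using sum_nonneg_eq_0_iff[of "{..<d}" "Kd L"] s nn by simp
  then show ?thesis using Kd_nonneg(2) L C unfolding CC_def by blast
qed

end
locale bisect = pyth +
  assumes prodf: "\<forall>x\<in>prodspace d S. \<pi> x = (\<Prod>i<d. marg d S \<pi> i (x i))"
    and stat: "stationary (prodspace d S) \<pi> P"
begin

lemma dual_stoch: "stoch X (dual \<pi> P)"
  unfolding stoch_def
proof (intro conjI ballI)
  fix x y assume "x \<in> X" "y \<in> X"
  then show "0 \<le> dual \<pi> P x y" unfolding dual_def using pos Pnn by (simp add: less_imp_le)
next
  fix x assume x: "x \<in> X"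
  have "(\<Sum>y\<in>X. dual \<pi> P x y) = (\<Sum>y\<in>X. \<pi> y * P y x) / \<pi> x"
    unfolding dual_def by (simp add: sum_divide_distrib)
  also have "\<dots> = 1" using stat x pos[rule_format, OF x] unfolding stationary_def by simp
  finally show "(\<Sum>y\<in>X. dual \<pi> P x y) = 1" .
qed

interpretation D: pyth d S \<pi> "dual \<pi> P"
  using fin dual_stoch pm pos by unfold_locales auto

lemma Mdual: assumes i: "i < d" and a: "a \<in> S i" and b: "b \<in> S i"
  shows "margP d S \<pi> (dual \<pi> P) i a b = mg i b * M i b a / mg i a"
proof -
  have "D.N i a b = (\<Sum>x\<in>X. \<Sum>y\<in>X. if x i = a \<and> y i = b then \<pi> y * P y x else 0)"
    unfolding D.N_def dual_def using pos by (intro sum.cong refl) auto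
  also have "\<dots> = (\<Sum>y\<in>X. \<Sum>x\<in>X. if y i = b \<and> x i = a then \<pi> y * P y x else 0)"
    by (subst sum.swap) (simp add: conj_commute)
  also have "\<dots> = N i b a" unfolding N_def ..
  also have "\<dots> = mg i b * M i b a" using mgM i b by simp
  finally show ?thesis using D.M_eq by simp
qed

lemma tensor_dual: assumes x: "x \<in> X" and y: "y \<in> X"
  shows "tensor d (margP d S \<pi> (dual \<pi> P)) x y = \<pi> y * tensor d M y x / \<pi> x"
proof -
  have "tensor d (margP d S \<pi> (dual \<pi> P)) x y = (\<Prod>j<d. mg j (y j) * M j (y j) (x j) / mg j (x j))"
    unfolding tensor_def using Mdual memX x y by (intro prod.cong refl) auto
  also have "\<dots> = (\<Prod>j<d. mg j (y j)) * (\<Prod>j<d. M j (y j) (x j)) / (\<Prod>j<d. mg j (x j))"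
    by (simp add: prod_dividef prod.distrib)
  also have "\<dots> = \<pi> y * tensor d M y x / \<pi> x" using prodf x y unfolding tensor_def by simp
  finally show ?thesis .
qed

lemma K0_dual: "D.K0 = K0"
proof -
  define T where "T y x = (if \<pi> y = 0 \<or> P y x = 0 then 0 else \<pi> y * P y x * ln (P y x / tensor d M y x))" for y x
  have "D.K0 = (\<Sum>x\<in>X. \<Sum>y\<in>X. T y x)"
    unfolding D.K0_def
  proof (intro sum.cong refl)
    fix x y assume x: "x \<in> X" and y: "y \<in> X"
    have px: "0 < \<pi> x" and py: "0 < \<pi> y" using pos x y by auto
    show "(if \<pi> x = 0 \<or> dual \<pi> P x y = 0 then 0
          else \<pi> x * dual \<pi> P x y * ln (dual \<pi> P x y / tensor d (margP d S \<pi> (dual \<pi> P)) x y)) = T y x"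
    proof (cases "P y x = 0")
      case True then show ?thesis unfolding T_def dual_def by simp
    next
      case False
      then have Pp: "0 < P y x" using Pnn[OF y x] by simp
      have tp: "0 < tensor d M y x" using F3[OF y x Pp] by (intro tensor_pos) auto
      have e1: "\<pi> x * dual \<pi> P x y = \<pi> y * P y x" unfolding dual_def using px by simp
      have e2: "dual \<pi> P x y / tensor d (margP d S \<pi> (dual \<pi> P)) x y = P y x / tensor d M y x"
        unfolding tensor_dual[OF x y] dual_def using px py tp by (simp add: field_simps)
      show ?thesis unfolding T_def using e1 e2 False px py unfolding dual_def by simp
    qed
  qed
  also have "\<dots> = (\<Sum>y\<in>X. \<Sum>x\<in>X. T y x)" by (rule sum.swap)
  also have "\<dots> = K0" unfolding K0_def T_def ..
  finally show ?thesis .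
qed

lemma bisect_main: "Iinfo d S \<pi> P = Iinfo d S \<pi> (dual \<pi> P)"
  using Iinfo_eq D.Iinfo_eq K0_dual by simp

end

theorem theorem2p9:
  fixes d :: nat and S :: "nat \<Rightarrow> 'a set"
    and P :: "(nat \<Rightarrow> 'a) \<Rightarrow> (nat \<Rightarrow> 'a) \<Rightarrow> real"
    and Ls :: "nat \<Rightarrow> 'a \<Rightarrow> 'a \<Rightarrow> real"
  assumes fin: "\<forall>i<d. finite (S i)"
    and P_stoch: "stoch (prodspace d S) P"
    and L_stoch: "\<forall>i<d. stoch (S i) (Ls i)"
  shows
    "(\<forall>\<pi>. pmass (prodspace d S) \<pi> \<and> (\<forall>x\<in>prodspace d S. 0 < \<pi> x) \<longrightarrow>
        KL (prodspace d S) \<pi> P (tensor d Ls)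
          = KL (prodspace d S) \<pi> P (tensor d (margP d S \<pi> P))
            + KL (prodspace d S) \<pi> (tensor d (margP d S \<pi> P)) (tensor d Ls)
      \<and> KL (prodspace d S) \<pi> P (tensor d Ls)
          = KL (prodspace d S) \<pi> P (tensor d (margP d S \<pi> P))
            + (\<Sum>i<d. KL (S i) (marg d S \<pi> i) (margP d S \<pi> P i) (Ls i))
      \<and> (\<forall>i<d. stoch (S i) (margP d S \<pi> P i))
      \<and> (\<forall>Ls'. (\<forall>i<d. stoch (S i) (Ls' i))
            \<and> KL (prodspace d S) \<pi> P (tensor d Ls') = Iinfo d S \<pi> P
            \<longrightarrow> (\<forall>i<d. \<forall>a\<in>S i. \<forall>b\<in>S i. Ls' i a b = margP d S \<pi> P i a b))
      \<and> Iinfo d S \<pi> P = KL (prodspace d S) \<pi> P (tensor d (margP d S \<pi> P)))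
   \<and> (\<forall>\<pi>. pmass (prodspace d S) \<pi> \<and> (\<forall>x\<in>prodspace d S. 0 < \<pi> x)
        \<and> (\<forall>x\<in>prodspace d S. \<pi> x = (\<Prod>i<d. marg d S \<pi> i (x i)))
        \<and> stationary (prodspace d S) \<pi> P
      \<longrightarrow> Iinfo d S \<pi> P = Iinfo d S \<pi> (dual \<pi> P))"
proof (rule conjI; intro allI impI)
  fix \<pi> assume H: "pmass (prodspace d S) \<pi> \<and> (\<forall>x\<in>prodspace d S. 0 < \<pi> x)"
  interpret pyth d S \<pi> P using fin P_stoch H by unfold_locales auto
  show "KL (prodspace d S) \<pi> P (tensor d Ls)
          = KL (prodspace d S) \<pi> P (tensor d (margP d S \<pi> P))
            + KL (prodspace d S) \<pi> (tensor d (margP d S \<pi> P)) (tensor d Ls)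
      \<and> KL (prodspace d S) \<pi> P (tensor d Ls)
          = KL (prodspace d S) \<pi> P (tensor d (margP d S \<pi> P))
            + (\<Sum>i<d. KL (S i) (marg d S \<pi> i) (margP d S \<pi> P i) (Ls i))
      \<and> (\<forall>i<d. stoch (S i) (margP d S \<pi> P i))
      \<and> (\<forall>Ls'. (\<forall>i<d. stoch (S i) (Ls' i))
            \<and> KL (prodspace d S) \<pi> P (tensor d Ls') = Iinfo d S \<pi> P
            \<longrightarrow> (\<forall>i<d. \<forall>a\<in>S i. \<forall>b\<in>S i. Ls' i a b = margP d S \<pi> P i a b))
      \<and> Iinfo d S \<pi> P = KL (prodspace d S) \<pi> P (tensor d (margP d S \<pi> P))"
    using part1[OF L_stoch] M_stoch uniq Iinfo_eq KL_PM by auto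
next
  fix \<pi> assume H: "pmass (prodspace d S) \<pi> \<and> (\<forall>x\<in>prodspace d S. 0 < \<pi> x)
        \<and> (\<forall>x\<in>prodspace d S. \<pi> x = (\<Prod>i<d. marg d S \<pi> i (x i)))
        \<and> stationary (prodspace d S) \<pi> P"
  interpret bisect d S \<pi> P using fin P_stoch H by unfold_locales auto
  show "Iinfo d S \<pi> P = Iinfo d S \<pi> (dual \<pi> P)" by (rule bisect_main)
qed

end
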